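(* Let $\mathcal{H}$ be a finite-dimensional Hilbert space, $P$ an orthogonal projection (the codespace projection), $Q = 1-P$, and let $\{F^\ell\}$ be operators with $F^\ell = PF^\ell Q$ such that $\sum_\ell F^{\ell\dagger}F^\ell = Q$ (so that $\mathcal{R}(\cdot) = \sum_\ell F^\ell(\cdot)F^{\ell\dagger}$ is a recovery channel from operators supported on the range of $Q$ into operators supported on the range of $P$), and such that for every $\ell,\ell'$: (i) $F^\ell (F^{\ell\dagger}F^\ell)^{-1}F^{\ell\dagger} = P$, and (ii) $F^\ell F^{\ell'\dagger} = \delta_{\ell\ell'}F^\ell F^{\ell\dagger}$. Let $\mathcal{L} = \sum_\ell \mathcal{D}[F^\ell]$ (the continuous recovery $\mathcal{R} - \mathcal{I}$ with the identity Kraus operator on the codespace removed), and assume $\mathcal{L}$ has the unique decoherence-free subspace with projection $P$. Consider small miscalibrations $F^\ell \to F^\ell + f^\ell$ (no Hamiltonian perturbation), where the operators $f^\ell_{\mathrm{ll}} = Qf^\ell P$ form a noise channel $\mathcal{E}(\cdot) = \sum_\ell f^\ell_{\mathrm{ll}}(\cdot)f^{\ell\dagger}_{\mathrm{ll}}$ correctable by $\mathcal{R}$, i.e. $\mathcal{R}\mathcal{E}(\rho) \propto \rho$ for all $\rho = P\rho P$. Then, to leading order, the miscalibrations induce no evolution within the codespace: $\mathcal{L}_{\mathrm{eff}}(\rho) = 0$ for all $\rho = P\rho P$.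
   Context: $\mathcal{D}[F](\rho) = F\rho F^\dagger - \tfrac12\{F^\dagger F,\rho\}$. $(F^{\ell\dagger}F^\ell)^{-1}$ denotes the inverse on its support (Moore–Penrose pseudoinverse). The effective generator is $\mathcal{L}_{\mathrm{eff}} = \mathcal{P}_\infty\mathcal{O}\mathcal{P}_\infty - \mathcal{P}_\infty\mathcal{O}_1\mathcal{L}^{-1}\mathcal{O}_1\mathcal{P}_\infty$, where $\mathcal{O} = \sum_\ell(\mathcal{D}[F^\ell+f^\ell] - \mathcal{D}[F^\ell])$, $\mathcal{O}_1(\rho) = \sum_\ell\big(F^\ell\rho f^{\ell\dagger} + f^\ell\rho F^{\ell\dagger} - \tfrac12\{F^{\ell\dagger}f^\ell + f^{\ell\dagger}F^\ell,\rho\}\big)$ is the part of $\mathcal{O}$ linear in the $f^\ell$, $\mathcal{L}^{-1}$ is the Drazin pseudoinverse of $\mathcal{L}$, and $\mathcal{P}_\infty = \mathcal{I} - \mathcal{L}\mathcal{L}^{-1} = \lim_{t\to\infty}e^{t\mathcal{L}}$ is the projection onto the steady states of $\mathcal{L}$. *)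

theory Defs
  imports "HOL-Analysis.Analysis"
begin

type_synonym 'n cmat = "complex^'n^'n"

definition adj :: "'n::finite cmat \<Rightarrow> 'n cmat" where
  "adj A = (\<chi> i j. cnj (A $ j $ i))"

definition cscale :: "complex \<Rightarrow> 'n::finite cmat \<Rightarrow> 'n cmat" where
  "cscale c A = (\<chi> i j. c * A $ i $ j)"

definition mp_pinv :: "'n::finite cmat \<Rightarrow> 'n cmat" where
  "mp_pinv A = (THE X. A ** X ** A = A \<and> X ** A ** X = X \<and>
                       adj (A ** X) = A ** X \<and> adj (X ** A) = X ** A)"

definition dissipator :: "'n::finite cmat \<Rightarrow> 'n cmat \<Rightarrow> 'n cmat" where
  "dissipator F \<rho> = F ** \<rho> ** adj F
      - scaleR (1/2) (adj F ** F ** \<rho> + \<rho> ** (adj F ** F))"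

text \<open>Drazin pseudoinverse of a superoperator (unique in any semigroup).\<close>
definition drazin_inv :: "('a \<Rightarrow> 'a) \<Rightarrow> ('a \<Rightarrow> 'a)" where
  "drazin_inv L = (THE D. D \<circ> L \<circ> D = D \<and> L \<circ> D = D \<circ> L \<and>
                          (\<exists>k::nat. (L ^^ Suc k) \<circ> D = L ^^ k))"

definition P_inf :: "('n::finite cmat \<Rightarrow> 'n cmat) \<Rightarrow> 'n cmat \<Rightarrow> 'n cmat" where
  "P_inf L \<rho> = \<rho> - L (drazin_inv L \<rho>)"

definition lindbladian :: "'l set \<Rightarrow> ('l \<Rightarrow> 'n::finite cmat) \<Rightarrow> 'n cmat \<Rightarrow> 'n cmat" where
  "lindbladian I F \<rho> = (\<Sum>l\<in>I. dissipator (F l) \<rho>)"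

definition recovery :: "'l set \<Rightarrow> ('l \<Rightarrow> 'n::finite cmat) \<Rightarrow> 'n cmat \<Rightarrow> 'n cmat" where
  "recovery I F \<rho> = (\<Sum>l\<in>I. F l ** \<rho> ** adj (F l))"

definition pertO :: "'l set \<Rightarrow> ('l \<Rightarrow> 'n::finite cmat) \<Rightarrow> ('l \<Rightarrow> 'n cmat) \<Rightarrow> 'n cmat \<Rightarrow> 'n cmat" where
  "pertO I F f \<rho> = (\<Sum>l\<in>I. dissipator (F l + f l) \<rho> - dissipator (F l) \<rho>)"

text \<open>O_1: the part of O linear in the f.\<close>
definition pertO1 :: "'l set \<Rightarrow> ('l \<Rightarrow> 'n::finite cmat) \<Rightarrow> ('l \<Rightarrow> 'n cmat) \<Rightarrow> 'n cmat \<Rightarrow> 'n cmat" where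
  "pertO1 I F f \<rho> = (\<Sum>l\<in>I. F l ** \<rho> ** adj (f l) + f l ** \<rho> ** adj (F l)
      - scaleR (1/2) ((adj (F l) ** f l + adj (f l) ** F l) ** \<rho>
                      + \<rho> ** (adj (F l) ** f l + adj (f l) ** F l)))"

definition L_eff :: "'l set \<Rightarrow> ('l \<Rightarrow> 'n::finite cmat) \<Rightarrow> ('l \<Rightarrow> 'n cmat) \<Rightarrow> 'n cmat \<Rightarrow> 'n cmat" where
  "L_eff I F f \<rho> =
     (let L = lindbladian I F; Pi = P_inf L
      in Pi (pertO I F f (Pi \<rho>)) - Pi (pertO1 I F f (drazin_inv L (pertO1 I F f (Pi \<rho>)))))"

end

theory Submission
  imports Defs
begin

lemma funpow_Suc_left': "f ^^ Suc n = f \<circ> f ^^ n" by simp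

lemma drazin_powD1:
  fixes L D :: "'a \<Rightarrow> 'a"
  assumes a1: "D \<circ> L \<circ> D = D" and a2: "L \<circ> D = D \<circ> L"
  shows "D ^^ Suc n \<circ> L ^^ n = D"
proof (induction n)
  case 0 then show ?case by simp
next
  case (Suc n)
  have DDL: "D \<circ> D \<circ> L = D"
  proof -
    have "D \<circ> D \<circ> L = D \<circ> (L \<circ> D)" using a2 by (simp only: comp_assoc)
    also have "\<dots> = D" using a1 by (simp only: comp_assoc)
    finally show ?thesis .
  qed
  have "D ^^ Suc (Suc n) \<circ> L ^^ Suc n = (D ^^ n \<circ> (D \<circ> D \<circ> L)) \<circ> L ^^ n"
    by (simp only: funpow_Suc_right[where f=D] funpow_Suc_left'[where f=L] comp_assoc)
  also have "\<dots> = (D ^^ n \<circ> D) \<circ> L ^^ n" using DDL by (simp only:)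
  also have "\<dots> = D" using Suc by (simp only: funpow_Suc_right)
  finally show ?case .
qed

lemma drazin_powD2:
  fixes L D :: "'a \<Rightarrow> 'a"
  assumes a1: "D \<circ> L \<circ> D = D" and a2: "L \<circ> D = D \<circ> L"
  shows "L ^^ n \<circ> D ^^ Suc n = D"
proof (induction n)
  case 0 then show ?case by simp
next
  case (Suc n)
  have LDD: "L \<circ> D \<circ> D = D"
  proof -
    have "L \<circ> D \<circ> D = D \<circ> L \<circ> D" using a2 by (simp only:)
    also have "\<dots> = D" using a1 by (simp only:)
    finally show ?thesis .
  qed
  have "L ^^ Suc n \<circ> D ^^ Suc (Suc n) = L ^^ n \<circ> (L \<circ> D \<circ> D) \<circ> D ^^ n"
    by (simp only: funpow_Suc_right[where f=L] funpow_Suc_left'[where f=D] comp_assoc)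
  also have "\<dots> = L ^^ n \<circ> D \<circ> D ^^ n" using LDD by (simp only:)
  also have "\<dots> = D" using Suc by (simp only: funpow_Suc_left' comp_assoc)
  finally show ?case .
qed

lemma drazin_comm_pow:
  fixes L D :: "'a \<Rightarrow> 'a"
  assumes "L \<circ> D = D \<circ> L"
  shows "L ^^ n \<circ> D = D \<circ> L ^^ n"
proof (induction n)
  case 0 then show ?case by simp
next
  case (Suc n)
  have "L ^^ Suc n \<circ> D = L \<circ> (L ^^ n \<circ> D)" by (simp only: funpow_Suc_left' comp_assoc)
  also have "\<dots> = (L \<circ> D) \<circ> L ^^ n" using Suc by (simp only: comp_assoc)
  also have "\<dots> = D \<circ> L ^^ Suc n" using assms by (simp only: comp_assoc funpow_Suc_left')
  finally show ?case .
qed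

lemma drazin_mono:
  fixes L D :: "'a \<Rightarrow> 'a"
  assumes "(L ^^ Suc k) \<circ> D = L ^^ k" "k \<le> m"
  shows "(L ^^ Suc m) \<circ> D = L ^^ m"
  using assms(2)
proof (induction m rule: dec_induct)
  case base then show ?case using assms(1) .
next
  case (step m)
  have "L ^^ Suc (Suc m) \<circ> D = L \<circ> (L ^^ Suc m \<circ> D)"
    by (simp only: funpow_Suc_left'[where n="Suc m"] comp_assoc)
  also have "\<dots> = L ^^ Suc m" using step(3) by (simp only: funpow_Suc_left')
  finally show ?case .
qed

lemma drazin_unique_aux:
  fixes L D D' :: "'a \<Rightarrow> 'a"
  assumes a1: "D \<circ> L \<circ> D = D" and a2: "L \<circ> D = D \<circ> L"
    and a3: "L \<circ> D' = D' \<circ> L" and a4: "(L ^^ Suc m) \<circ> D' = L ^^ m"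
  shows "D \<circ> L \<circ> D' = D" "D' \<circ> L \<circ> D = D"
proof -
  have p1: "D ^^ Suc m \<circ> L ^^ m = D" by (rule drazin_powD1[OF a1 a2])
  have "D \<circ> L \<circ> D' = (D ^^ Suc m \<circ> L ^^ m) \<circ> L \<circ> D'" using p1 by (simp only:)
  also have "\<dots> = D ^^ Suc m \<circ> (L ^^ Suc m \<circ> D')"
    by (simp only: funpow_Suc_right[where f=L and n=m] comp_assoc)
  also have "\<dots> = D" using a4 p1 by (simp only:)
  finally show "D \<circ> L \<circ> D' = D" .
  have c: "L ^^ Suc m \<circ> D' = D' \<circ> L ^^ Suc m" by (rule drazin_comm_pow[OF a3])
  have p2: "L ^^ m \<circ> D ^^ Suc m = D" by (rule drazin_powD2[OF a1 a2])
  have "D' \<circ> L \<circ> D = D' \<circ> L \<circ> (L ^^ m \<circ> D ^^ Suc m)" using p2 by (simp only:)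
  also have "\<dots> = (D' \<circ> L ^^ Suc m) \<circ> D ^^ Suc m"
    by (simp only: funpow_Suc_left'[where f=L and n=m] comp_assoc)
  also have "\<dots> = (L ^^ m) \<circ> D ^^ Suc m" using a4 c by (simp only:)
  also have "\<dots> = D" using p2 .
  finally show "D' \<circ> L \<circ> D = D" .
qed

lemma drazin_unique:
  fixes L D D' :: "'a \<Rightarrow> 'a"
  assumes "D \<circ> L \<circ> D = D" "L \<circ> D = D \<circ> L" "(L ^^ Suc k) \<circ> D = L ^^ k"
    and "D' \<circ> L \<circ> D' = D'" "L \<circ> D' = D' \<circ> L" "(L ^^ Suc k') \<circ> D' = L ^^ k'"
  shows "D = D'"
proof -
  have m1: "(L ^^ Suc (k+k')) \<circ> D = L ^^ (k+k')" by (rule drazin_mono[OF assms(3)]) simp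
  have m2: "(L ^^ Suc (k+k')) \<circ> D' = L ^^ (k+k')" by (rule drazin_mono[OF assms(6)]) simp
  have e1: "D \<circ> L \<circ> D' = D" by (rule drazin_unique_aux(1)[OF assms(1,2,5) m2])
  have e2: "D \<circ> L \<circ> D' = D'" by (rule drazin_unique_aux(2)[OF assms(4,5,2) m1])
  show ?thesis using e1 e2 by (simp only:)
qed

lemma drazin_inv_eq:
  assumes "D \<circ> L \<circ> D = D" "L \<circ> D = D \<circ> L" "(L ^^ Suc k) \<circ> D = L ^^ k"
  shows "drazin_inv L = D"
  unfolding drazin_inv_def
proof (rule the_equality)
  show "D \<circ> L \<circ> D = D \<and> L \<circ> D = D \<circ> L \<and> (\<exists>k. L ^^ Suc k \<circ> D = L ^^ k)"
    using assms by blast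
next
  fix D' assume "D' \<circ> L \<circ> D' = D' \<and> L \<circ> D' = D' \<circ> L \<and> (\<exists>k. L ^^ Suc k \<circ> D' = L ^^ k)"
  then obtain k' where "D' \<circ> L \<circ> D' = D'" "L \<circ> D' = D' \<circ> L" "L ^^ Suc k' \<circ> D' = L ^^ k'" by blast
  then show "D' = D" using drazin_unique[OF _ _ _ assms] by blast
qed



type_synonym 'n sop = "'n cmat \<Rightarrow> 'n cmat"

lemma mm_assoc: "(A ** B) ** C = A ** (B ** (C::'n::finite cmat))"
  by (simp add: matrix_mul_assoc)

lemma mm_ext: "A ** B = (C::'n::finite cmat) \<Longrightarrow> A ** (B ** X) = C ** (X::'n cmat)"
  by (simp add: matrix_mul_assoc)

lemma mm_rdistrib: "(A + B) ** C = A ** C + B ** (C::'n::finite cmat)"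
  by (simp add: matrix_matrix_mult_def vec_eq_iff sum.distrib distrib_right)

lemma mm_ldistrib: "C ** (A + B) = C ** A + C ** (B::'n::finite cmat)"
  by (rule matrix_add_ldistrib)

lemma mm_sub_r: "(A - B) ** C = A ** C - B ** (C::'n::finite cmat)"
  by (simp add: matrix_matrix_mult_def vec_eq_iff sum_subtractf left_diff_distrib)

lemma mm_sub_l: "C ** (A - B) = C ** A - C ** (B::'n::finite cmat)"
  by (simp add: matrix_matrix_mult_def vec_eq_iff sum_subtractf right_diff_distrib)

lemma mm_neg_r: "(- A) ** C = - (A ** (C::'n::finite cmat))"
  by (simp add: matrix_matrix_mult_def vec_eq_iff sum_negf)

lemma mm_neg_l: "C ** (- A) = - (C ** (A::'n::finite cmat))"
  by (simp add: matrix_matrix_mult_def vec_eq_iff sum_negf)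

lemma mm_scaleR_r: "(r *\<^sub>R A) ** C = r *\<^sub>R (A ** (C::'n::finite cmat))"
  by (simp add: scalar_matrix_assoc)

lemma mm_scaleR_l: "C ** (r *\<^sub>R A) = r *\<^sub>R (C ** (A::'n::finite cmat))"
  by (simp add: matrix_scalar_ac scalar_matrix_assoc)

lemma mm_cscale_r: "(cscale c A) ** C = cscale c (A ** (C::'n::finite cmat))"
  by (simp add: cscale_def matrix_matrix_mult_def vec_eq_iff sum_distrib_left mult.assoc)

lemma mm_cscale_l: "C ** (cscale c A) = cscale c (C ** (A::'n::finite cmat))"
  by (simp add: cscale_def matrix_matrix_mult_def vec_eq_iff sum_distrib_left mult_ac)

lemma mm_sum_r: "(sum f S) ** (C::'n::finite cmat) = sum (\<lambda>x. f x ** C) S"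
  by (induction S rule: infinite_finite_induct) (simp_all add: mm_rdistrib)

lemma mm_sum_l: "(C::'n::finite cmat) ** (sum f S) = sum (\<lambda>x. C ** f x) S"
  by (induction S rule: infinite_finite_induct) (simp_all add: matrix_add_ldistrib)

lemmas mm_simps = mm_assoc mm_rdistrib mm_ldistrib mm_sub_r mm_sub_l mm_neg_r mm_neg_l
  mm_scaleR_r mm_scaleR_l mm_cscale_r mm_cscale_l mm_sum_r mm_sum_l

lemma adj_adj[simp]: "adj (adj A) = A"
  by (simp add: adj_def vec_eq_iff)

lemma adj_mm: "adj (A ** B) = adj B ** adj (A::'n::finite cmat)"
  by (simp add: adj_def matrix_matrix_mult_def vec_eq_iff mult.commute)

lemma adj_add: "adj (A + B) = adj A + adj (B::'n::finite cmat)"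
  by (simp add: adj_def vec_eq_iff)

lemma adj_sub: "adj (A - B) = adj A - adj (B::'n::finite cmat)"
  by (simp add: adj_def vec_eq_iff)

lemma adj_neg: "adj (- A) = - adj (A::'n::finite cmat)"
  by (simp add: adj_def vec_eq_iff)

lemma adj_zero[simp]: "adj (0::'n::finite cmat) = 0"
  by (simp add: adj_def vec_eq_iff)

lemma adj_scaleR: "adj (r *\<^sub>R A) = r *\<^sub>R adj (A::'n::finite cmat)"
  by (simp add: adj_def vec_eq_iff)

lemma adj_cscale: "adj (cscale c A) = cscale (cnj c) (adj (A::'n::finite cmat))"
  by (simp add: adj_def cscale_def vec_eq_iff)

lemma adj_sum: "adj (sum f S) = sum (\<lambda>x. adj (f x)) (S::'a set)"
  for f :: "'a \<Rightarrow> 'n::finite cmat"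
  by (induction S rule: infinite_finite_induct) (simp_all add: adj_add)

lemma adj_mat: "adj (mat (1::complex)) = (mat 1 :: 'n::finite cmat)"
  by (simp add: adj_def mat_def vec_eq_iff)

lemmas adj_simps = adj_mm adj_add adj_sub adj_neg adj_scaleR adj_cscale adj_sum adj_mat

lemma cscale_add: "cscale c (A + B) = cscale c A + cscale c (B::'n::finite cmat)"
  by (simp add: cscale_def vec_eq_iff distrib_left)
lemma cscale_add2: "cscale a A + cscale b A = cscale (a + b) (A::'n::finite cmat)"
  by (simp add: cscale_def vec_eq_iff distrib_right)
lemma cscale_cscale: "cscale a (cscale b A) = cscale (a * b) (A::'n::finite cmat)"
  by (simp add: cscale_def vec_eq_iff)
lemma cscale_zero[simp]: "cscale c (0::'n::finite cmat) = 0"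
  by (simp add: cscale_def vec_eq_iff)
lemma cscale_zero2[simp]: "cscale 0 (A::'n::finite cmat) = 0"
  by (simp add: cscale_def vec_eq_iff)
lemma cscale_one[simp]: "cscale 1 (A::'n::finite cmat) = A"
  by (simp add: cscale_def vec_eq_iff)
lemma cscale_eq0: "cscale c (A::'n::finite cmat) = 0 \<Longrightarrow> c \<noteq> 0 \<Longrightarrow> A = 0"
  by (simp add: cscale_def vec_eq_iff)
lemma cscale_sub: "cscale a A - cscale b A = cscale (a - b) (A::'n::finite cmat)"
  by (simp add: cscale_def vec_eq_iff left_diff_distrib)
lemma scaleR_cscale: "r *\<^sub>R (A::'n::finite cmat) = cscale (of_real r) A"
  unfolding cscale_def vec_eq_iff by (auto simp: scaleR_conv_of_real[where 'a=complex])

lemma trace_mm_sym: "trace ((A::'n::finite cmat) ** B) = trace (B ** A)"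
  by (rule trace_mul_sym)
lemma trace_sum: "trace (sum f S) = (\<Sum>x\<in>S. trace (f x :: 'n::finite cmat))"
  by (induction S rule: infinite_finite_induct) (simp_all add: trace_def sum.distrib)
lemma trace_cscale: "trace (cscale c (A::'n::finite cmat)) = c * trace A"
  by (simp add: trace_def cscale_def sum_distrib_left)
lemma trace_zero: "trace (0::'n::finite cmat) = 0"
  by (simp add: trace_def)

lemma trace_adj_zero:
  fixes Z :: "'n::finite cmat"
  assumes "trace (Z ** adj Z) = 0"
  shows "Z = 0"
proof -
  have pw: "\<And>z. z * cnj z = complex_of_real ((cmod z)\<^sup>2)" by (metis complex_norm_square)
  have "trace (Z ** adj Z) = (\<Sum>i\<in>UNIV. \<Sum>k\<in>UNIV. complex_of_real ((cmod (Z $ i $ k))\<^sup>2))"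
    unfolding trace_def matrix_matrix_mult_def adj_def using pw by simp
  also have "\<dots> = complex_of_real (\<Sum>i\<in>UNIV. \<Sum>k\<in>UNIV. (cmod (Z $ i $ k))\<^sup>2)"
    by simp
  finally have "complex_of_real (\<Sum>i\<in>UNIV. \<Sum>k\<in>UNIV. (cmod (Z $ i $ k))\<^sup>2) = 0"
    using assms by (simp only:)
  then have "(\<Sum>i\<in>UNIV. \<Sum>k\<in>UNIV. (cmod (Z $ i $ k))\<^sup>2) = 0"
    by (simp only: of_real_eq_0_iff)
  then have "\<forall>i. (\<Sum>k\<in>UNIV. (cmod (Z $ i $ k))\<^sup>2) = 0"
    by (subst (asm) sum_nonneg_eq_0_iff) (auto intro: sum_nonneg)
  then have "\<forall>i k. (cmod (Z $ i $ k))\<^sup>2 = 0"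
    by (subst (asm) sum_nonneg_eq_0_iff) auto
  then show ?thesis by (simp add: vec_eq_iff)
qed



lemma mp_unique:
  fixes A X Y :: "'n::finite cmat"
  assumes x1: "A ** X ** A = A" and x2: "X ** A ** X = X" and x3: "adj (A ** X) = A ** X"
    and x4: "adj (X ** A) = X ** A"
    and y1: "A ** Y ** A = A" and y2: "Y ** A ** Y = Y" and y3: "adj (A ** Y) = A ** Y"
    and y4: "adj (Y ** A) = Y ** A"
  shows "X = Y"
proof -
  have aA: "adj A = adj A ** adj Y ** adj A"
    using arg_cong[OF y1, of adj] by (simp add: adj_mm mm_assoc)
  have aA2: "adj A = adj A ** adj X ** adj A"
    using arg_cong[OF x1, of adj] by (simp add: adj_mm mm_assoc)
  have "X = X ** (A ** X)" using x2 by (simp add: mm_assoc)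
  also have "\<dots> = X ** adj (A ** X)" using x3 by simp
  also have "\<dots> = X ** adj X ** adj A" by (simp add: adj_mm mm_assoc)
  also have "\<dots> = X ** adj X ** (adj A ** adj Y ** adj A)" using aA by simp
  also have "\<dots> = X ** adj (A ** X) ** adj (A ** Y)" by (simp add: adj_mm mm_assoc)
  also have "\<dots> = (X ** A ** X) ** A ** Y" using x3 y3 by (simp add: mm_assoc)
  also have "\<dots> = X ** A ** Y" using x2 by simp
  finally have e1: "X = X ** A ** Y" .
  have "Y = (Y ** A) ** Y" using y2 by (simp add: mm_assoc)
  also have "\<dots> = adj (Y ** A) ** Y" using y4 by simp
  also have "\<dots> = adj A ** adj Y ** Y" by (simp add: adj_mm mm_assoc)
  also have "\<dots> = (adj A ** adj X ** adj A) ** adj Y ** Y" using aA2 by simp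
  also have "\<dots> = adj (X ** A) ** adj (Y ** A) ** Y" by (simp add: adj_mm mm_assoc)
  also have "\<dots> = X ** A ** (Y ** A ** Y)" using x4 y4 by (simp add: mm_assoc)
  also have "\<dots> = X ** A ** Y" using y2 by simp
  finally have e2: "Y = X ** A ** Y" .
  show ?thesis using e1 e2 by simp
qed

lemma mp_pinv_eq:
  fixes A X :: "'n::finite cmat"
  assumes "A ** X ** A = A" "X ** A ** X = X" "adj (A ** X) = A ** X" "adj (X ** A) = X ** A"
  shows "mp_pinv A = X"
  unfolding mp_pinv_def
proof (rule the_equality)
  show "A ** X ** A = A \<and> X ** A ** X = X \<and> adj (A ** X) = A ** X \<and> adj (X ** A) = X ** A"
    using assms by (intro conjI)
next
  fix Y assume "A ** Y ** A = A \<and> Y ** A ** Y = Y \<and> adj (A ** Y) = A ** Y \<and> adj (Y ** A) = Y ** A"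
  then show "Y = X" using mp_unique[of A Y X] assms by (elim conjE) simp
qed

locale qec =
  fixes P Q :: "'n::finite cmat" and I :: "'l set" and F :: "'l \<Rightarrow> 'n cmat"
  assumes finI: "finite I" and PP: "P ** P = P" and adjP: "adj P = P" and Qdef: "Q = mat 1 - P"
    and FPQ: "\<And>l. l \<in> I \<Longrightarrow> F l = P ** F l ** Q"
    and sumQ: "(\<Sum>l\<in>I. adj (F l) ** F l) = Q"
    and pinv: "\<And>l. l \<in> I \<Longrightarrow> F l ** mp_pinv (adj (F l) ** F l) ** adj (F l) = P"
    and orth: "\<And>l l'. l \<in> I \<Longrightarrow> l' \<in> I \<Longrightarrow> l \<noteq> l' \<Longrightarrow> F l ** adj (F l') = 0"
begin

lemma PplusQ: "P + Q = mat 1" using Qdef by simp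
lemma QQ: "Q ** Q = Q" using PP by (simp add: Qdef mm_sub_l mm_sub_r)
lemma PQ: "P ** Q = 0" using PP by (simp add: Qdef mm_sub_l)
lemma QP: "Q ** P = 0" using PP by (simp add: Qdef mm_sub_r)
lemma adjQ: "adj Q = Q" using adjP by (simp add: Qdef adj_sub adj_mat)

lemma PF: "l \<in> I \<Longrightarrow> P ** F l = F l"
proof -
  assume l: "l \<in> I"
  have "P ** F l = P ** (P ** F l ** Q)" using FPQ[OF l] by (rule arg_cong)
  also have "\<dots> = P ** F l ** Q" using mm_ext[OF PP] by (simp add: mm_assoc)
  finally show ?thesis using FPQ[OF l, symmetric] by simp
qed

lemma FQ: "l \<in> I \<Longrightarrow> F l ** Q = F l"
proof -
  assume l: "l \<in> I"
  have "F l ** Q = (P ** F l ** Q) ** Q" using FPQ[OF l] by (rule arg_cong)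
  also have "\<dots> = P ** F l ** Q" using QQ by (simp add: mm_assoc)
  finally show ?thesis using FPQ[OF l, symmetric] by simp
qed

lemma FP: "l \<in> I \<Longrightarrow> F l ** P = 0"
proof -
  assume l: "l \<in> I"
  have "F l ** P = (F l ** Q) ** P" using FQ[OF l] by simp
  also have "\<dots> = 0" using QP by (simp add: mm_assoc)
  finally show ?thesis .
qed

lemma QF: "l \<in> I \<Longrightarrow> Q ** F l = 0"
proof -
  assume l: "l \<in> I"
  have "Q ** F l = Q ** (P ** F l)" using PF[OF l] by simp
  also have "\<dots> = 0" using QP by (simp add: mm_assoc[symmetric])
  finally show ?thesis .
qed

lemma aFP: "l \<in> I \<Longrightarrow> adj (F l) ** P = adj (F l)"
  using arg_cong[OF PF, of l adj] adjP by (simp add: adj_mm)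
lemma QaF: "l \<in> I \<Longrightarrow> Q ** adj (F l) = adj (F l)"
  using arg_cong[OF FQ, of l adj] adjQ by (simp add: adj_mm)
lemma PaF: "l \<in> I \<Longrightarrow> P ** adj (F l) = 0"
  using arg_cong[OF FP, of l adj] adjP by (simp add: adj_mm)
lemma aFQ: "l \<in> I \<Longrightarrow> adj (F l) ** Q = 0"
  using arg_cong[OF QF, of l adj] adjQ by (simp add: adj_mm)
lemma FF: "l \<in> I \<Longrightarrow> m \<in> I \<Longrightarrow> F l ** F m = 0"
proof -
  assume l: "l \<in> I" and m: "m \<in> I"
  have "F l ** F m = F l ** (P ** F m)" using PF[OF m] by simp
  also have "\<dots> = 0" using FP[OF l] by (simp add: mm_assoc[symmetric])
  finally show ?thesis .
qed
lemma aFaF: "l \<in> I \<Longrightarrow> m \<in> I \<Longrightarrow> adj (F m) ** adj (F l) = 0"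
  using arg_cong[OF FF, of l m adj] by (simp add: adj_mm)

lemma FaFF: "l \<in> I \<Longrightarrow> F l ** adj (F l) ** F l = F l"
proof -
  assume l: "l \<in> I"
  have "F l = F l ** Q" using FQ[OF l] by simp
  also have "\<dots> = (\<Sum>m\<in>I. F l ** adj (F m) ** F m)" by (simp add: sumQ[symmetric] mm_sum_l mm_assoc)
  also have "\<dots> = F l ** adj (F l) ** F l + (\<Sum>m\<in>I-{l}. F l ** adj (F m) ** F m)"
    using finI l by (simp add: sum.remove)
  also have "(\<Sum>m\<in>I-{l}. F l ** adj (F m) ** F m) = 0"
  proof (rule sum.neutral, rule ballI)
    fix m assume "m \<in> I - {l}"
    then have "l \<noteq> m" "m \<in> I" by auto
    then show "F l ** adj (F m) ** F m = 0" using orth[OF l, of m] by simp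
  qed
  finally show ?thesis by simp
qed

lemma FaF: "l \<in> I \<Longrightarrow> F l ** adj (F l) = P"
proof -
  assume l: "l \<in> I"
  define G where "G = adj (F l) ** F l"
  have GG: "G ** G = G" using FaFF[OF l] by (simp add: G_def mm_assoc)
  have aG: "adj G = G" by (simp add: G_def adj_mm)
  have "mp_pinv G = G"
    by (rule mp_pinv_eq) (simp_all add: GG aG)
  then have "P = F l ** G ** adj (F l)" using pinv[OF l] by (simp add: G_def)
  also have "\<dots> = (F l ** adj (F l) ** F l) ** adj (F l)" by (simp add: G_def mm_assoc)
  finally show ?thesis using FaFF[OF l] by simp
qed

end


context qec begin

lemma PPx: "P ** (P ** (X::'n cmat)) = P ** X" by (rule mm_ext[OF PP])
lemma PQx: "P ** (Q ** (X::'n cmat)) = 0" using mm_ext[OF PQ] by simp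
lemma QPx: "Q ** (P ** (X::'n cmat)) = 0" using mm_ext[OF QP] by simp
lemma QQx: "Q ** (Q ** (X::'n cmat)) = Q ** X" by (rule mm_ext[OF QQ])
lemma PFx: "l \<in> I \<Longrightarrow> P ** (F l ** (X::'n cmat)) = F l ** X" by (rule mm_ext[OF PF])
lemma FQx: "l \<in> I \<Longrightarrow> F l ** (Q ** (X::'n cmat)) = F l ** X" by (rule mm_ext[OF FQ])
lemma FPx: "l \<in> I \<Longrightarrow> F l ** (P ** (X::'n cmat)) = 0" using mm_ext[OF FP] by simp
lemma QFx: "l \<in> I \<Longrightarrow> Q ** (F l ** (X::'n cmat)) = 0" using mm_ext[OF QF] by simp
lemma aFPx: "l \<in> I \<Longrightarrow> adj (F l) ** (P ** (X::'n cmat)) = adj (F l) ** X" by (rule mm_ext[OF aFP])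
lemma QaFx: "l \<in> I \<Longrightarrow> Q ** (adj (F l) ** (X::'n cmat)) = adj (F l) ** X" by (rule mm_ext[OF QaF])
lemma PaFx: "l \<in> I \<Longrightarrow> P ** (adj (F l) ** (X::'n cmat)) = 0" using mm_ext[OF PaF] by simp
lemma aFQx: "l \<in> I \<Longrightarrow> adj (F l) ** (Q ** (X::'n cmat)) = 0" using mm_ext[OF aFQ] by simp
lemma FFx: "l \<in> I \<Longrightarrow> m \<in> I \<Longrightarrow> F l ** (F m ** (X::'n cmat)) = 0" using mm_ext[OF FF] by simp
lemma aFaFx: "l \<in> I \<Longrightarrow> m \<in> I \<Longrightarrow> adj (F m) ** (adj (F l) ** (X::'n cmat)) = 0"
  using mm_ext[OF aFaF] by simp
lemma FaFx: "l \<in> I \<Longrightarrow> F l ** (adj (F l) ** (X::'n cmat)) = P ** X" by (rule mm_ext[OF FaF])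

lemmas blk = PP PQ QP QQ PPx PQx QPx QQx PF FQ FP QF aFP QaF PaF aFQ FF aFaF FaF
  PFx FQx FPx QFx aFPx QaFx PaFx aFQx FFx aFaFx FaFx

abbreviation R where "R \<equiv> recovery I F"

lemma R_add: "R (X + Y) = R X + R Y"
  by (simp add: recovery_def mm_simps sum.distrib)
lemma R_sub: "R (X - Y) = R X - R Y"
  by (simp add: recovery_def mm_simps sum_subtractf)
lemma R_neg: "R (- X) = - R X"
  by (simp add: recovery_def mm_simps sum_negf)
lemma R_scaleR: "R (r *\<^sub>R X) = r *\<^sub>R R X"
  by (simp add: recovery_def mm_simps scaleR_sum_right)
lemma R_cscale: "R (cscale c X) = cscale c (R X)"
proof -
  have "R (cscale c X) = (\<Sum>l\<in>I. cscale c (F l ** X ** adj (F l)))"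
    by (simp add: recovery_def mm_cscale_l mm_cscale_r)
  also have "\<dots> = cscale c (R X)"
    by (simp add: recovery_def cscale_def vec_eq_iff sum_component sum_distrib_left)
  finally show ?thesis .
qed
lemma R_zero: "R 0 = 0" by (simp add: recovery_def)
lemma R_Pl: "R (P ** X) = 0" by (simp add: recovery_def mm_simps blk)
lemma R_Pr: "R (X ** P) = 0" by (simp add: recovery_def mm_simps blk)
lemma R_Ql: "R (Q ** X) = R X" by (simp add: recovery_def mm_simps blk)
lemma R_Qr: "R (X ** Q) = R X" by (simp add: recovery_def mm_simps blk)
lemma P_R: "P ** R X = R X" by (simp add: recovery_def mm_simps blk)
lemma R_P: "R X ** P = R X" by (simp add: recovery_def mm_simps blk)
lemma Q_R: "Q ** R X = 0" by (simp add: recovery_def mm_simps blk)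
lemma R_Q: "R X ** Q = 0" by (simp add: recovery_def mm_simps blk)
lemma P_Rx: "P ** (R X ** (Y::'n cmat)) = R X ** Y" by (simp add: mm_assoc[symmetric] P_R)
lemma R_Px: "R X ** (P ** (Y::'n cmat)) = R X ** Y" by (simp add: mm_assoc[symmetric] R_P)
lemma Q_Rx: "Q ** (R X ** (Y::'n cmat)) = 0" by (simp add: mm_assoc[symmetric] Q_R)
lemma R_Qx: "R X ** (Q ** (Y::'n cmat)) = 0" by (simp add: mm_assoc[symmetric] R_Q)
lemma R_R: "R (R X) = 0" using R_Pl[of "R X"] by (simp add: P_R)

lemmas Rs = R_add R_sub R_neg R_scaleR R_zero R_Pl R_Pr R_Ql R_Qr P_R R_P Q_R R_Q
  P_Rx R_Px Q_Rx R_Qx R_R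


lemma decomp: "X = P ** X ** P + P ** X ** Q + Q ** X ** P + Q ** (X::'n cmat) ** Q"
proof -
  have "X = (P + Q) ** X ** (P + Q)" by (simp add: PplusQ)
  then show ?thesis by (simp add: mm_simps algebra_simps)
qed

lemma QX: "Q ** X = Q ** X ** P + Q ** (X::'n cmat) ** Q"
proof -
  have "Q ** X = Q ** X ** (P + Q)" by (simp add: PplusQ)
  also have "\<dots> = Q ** X ** P + Q ** X ** Q" by (simp only: mm_ldistrib)
  finally show ?thesis .
qed

lemma XQ: "X ** Q = P ** X ** Q + Q ** (X::'n cmat) ** Q"
proof -
  have "X ** Q = (P + Q) ** X ** Q" by (simp add: PplusQ)
  also have "\<dots> = P ** X ** Q + Q ** X ** Q" by (simp only: mm_rdistrib)
  finally show ?thesis .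
qed

abbreviation Lf where "Lf \<equiv> lindbladian I F"

lemma L_eq: "Lf X = R X - Q ** X ** Q - (1/2) *\<^sub>R (P ** X ** Q + Q ** X ** P)"
proof -
  have "Lf X = R X - (1/2) *\<^sub>R ((\<Sum>l\<in>I. adj (F l) ** F l) ** X + X ** (\<Sum>l\<in>I. adj (F l) ** F l))"
    by (simp add: lindbladian_def dissipator_def recovery_def sum_subtractf scaleR_sum_right
        sum.distrib mm_sum_l mm_sum_r scaleR_right_distrib)
  also have "\<dots> = R X - (1/2) *\<^sub>R (Q ** X + X ** Q)" by (simp add: sumQ)
  also have "\<dots> = R X - Q ** X ** Q - (1/2) *\<^sub>R (P ** X ** Q + Q ** X ** P)"
    by (subst QX, subst XQ) (simp add: algebra_simps scaleR_right_distrib)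
  finally show ?thesis .
qed

definition D0 where "D0 X = R X - Q ** X ** Q - 2 *\<^sub>R (P ** X ** Q + Q ** X ** P)"

lemma LD0: "Lf (D0 X) = - R X + Q ** X ** Q + (P ** X ** Q + Q ** X ** P)"
  by (simp add: L_eq D0_def mm_simps blk Rs algebra_simps)

lemma D0L: "D0 (Lf X) = - R X + Q ** X ** Q + (P ** X ** Q + Q ** X ** P)"
  by (simp add: L_eq D0_def mm_simps blk Rs algebra_simps)


lemma D0LD0: "D0 (Lf (D0 X)) = D0 X"
  unfolding LD0 by (simp add: D0_def mm_simps blk Rs algebra_simps)

lemma LLD0: "Lf (Lf (D0 X)) = Lf X"
  unfolding LD0 by (simp add: L_eq mm_simps blk Rs algebra_simps)

lemma drazin_D0: "drazin_inv Lf = D0"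
proof (rule drazin_inv_eq[where k=1])
  show "D0 \<circ> Lf \<circ> D0 = D0" by (simp add: fun_eq_iff D0LD0)
  show "Lf \<circ> D0 = D0 \<circ> Lf" by (simp add: fun_eq_iff LD0 D0L)
  show "Lf ^^ Suc 1 \<circ> D0 = Lf ^^ 1" by (simp add: fun_eq_iff LLD0)
qed

lemma Pinf_eq: "P_inf Lf X = P ** X ** P + R X"
proof -
  have "P_inf Lf X = X - Lf (D0 X)" by (simp add: P_inf_def drazin_D0)
  also have "\<dots> = P ** X ** P + R X"
    unfolding LD0 by (subst decomp[of X]) (simp add: algebra_simps)
  finally show ?thesis .
qed

end


locale qec2 = qec P Q I F for P Q :: "'n::finite cmat" and I :: "'l set" and F +
  fixes f :: "'l \<Rightarrow> 'n cmat" and \<rho> :: "'n cmat"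
  assumes rho: "P ** \<rho> ** P = \<rho>"
begin

lemma Pr: "P ** \<rho> = \<rho>"
proof -
  have "P ** \<rho> = P ** (P ** \<rho> ** P)" using rho by (simp only:)
  also have "\<dots> = \<rho>" by (metis mm_assoc PP rho)
  finally show ?thesis .
qed
lemma rP: "\<rho> ** P = \<rho>"
proof -
  have "\<rho> ** P = (P ** \<rho> ** P) ** P" using rho by (simp only:)
  also have "\<dots> = \<rho>" by (metis mm_assoc PP rho)
  finally show ?thesis .
qed
lemma Qr: "Q ** \<rho> = 0"
proof -
  have "Q ** \<rho> = Q ** (P ** \<rho>)" using Pr by simp
  also have "\<dots> = 0" by (simp add: QPx)
  finally show ?thesis .
qed
lemma rQ: "\<rho> ** Q = 0"
proof -
  have "\<rho> ** Q = (\<rho> ** P) ** Q" using rP by simp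
  also have "\<dots> = 0" by (simp add: mm_assoc PQ)
  finally show ?thesis .
qed
lemma Fr: "l \<in> I \<Longrightarrow> F l ** \<rho> = 0"
proof -
  assume l: "l \<in> I"
  have "F l ** \<rho> = F l ** (P ** \<rho>)" using Pr by simp
  also have "\<dots> = 0" using l by (simp add: FPx)
  finally show ?thesis .
qed
lemma raF: "l \<in> I \<Longrightarrow> \<rho> ** adj (F l) = 0"
proof -
  assume l: "l \<in> I"
  have "\<rho> ** adj (F l) = (\<rho> ** P) ** adj (F l)" using rP by simp
  also have "\<dots> = 0" using l by (simp add: mm_assoc PaF)
  finally show ?thesis .
qed
lemma Prx: "P ** (\<rho> ** (X::'n cmat)) = \<rho> ** X" by (rule mm_ext[OF Pr])
lemma rPx: "\<rho> ** (P ** (X::'n cmat)) = \<rho> ** X" by (rule mm_ext[OF rP])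
lemma Qrx: "Q ** (\<rho> ** (X::'n cmat)) = 0" using mm_ext[OF Qr] by simp
lemma rQx: "\<rho> ** (Q ** (X::'n cmat)) = 0" using mm_ext[OF rQ] by simp
lemma Frx: "l \<in> I \<Longrightarrow> F l ** (\<rho> ** (X::'n cmat)) = 0" using mm_ext[OF Fr] by simp
lemma raFx: "l \<in> I \<Longrightarrow> \<rho> ** (adj (F l) ** (X::'n cmat)) = 0" using mm_ext[OF raF] by simp

lemmas rhos = Pr rP Qr rQ Fr raF Prx rPx Qrx rQx Frx raFx

definition A where "A = (\<Sum>l\<in>I. adj (F l) ** f l)"
definition B where "B = (\<Sum>l\<in>I. adj (f l) ** F l)"

lemma adjA: "adj A = B" by (simp add: A_def B_def adj_simps)
lemma PA: "P ** A = 0" by (simp add: A_def mm_simps blk)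
lemma QA: "Q ** A = A" by (simp add: A_def mm_simps blk)
lemma BP: "B ** P = 0" by (simp add: B_def mm_simps blk)
lemma BQ: "B ** Q = B" by (simp add: B_def mm_simps blk)
lemma FA: "m \<in> I \<Longrightarrow> F m ** A = P ** f m"
proof -
  assume m: "m \<in> I"
  have "F m ** A = (\<Sum>l\<in>I. F m ** adj (F l) ** f l)" by (simp add: A_def mm_sum_l mm_assoc)
  also have "\<dots> = F m ** adj (F m) ** f m + (\<Sum>l\<in>I-{m}. F m ** adj (F l) ** f l)"
    using finI m by (simp add: sum.remove)
  also have "(\<Sum>l\<in>I-{m}. F m ** adj (F l) ** f l) = 0"
  proof (rule sum.neutral, rule ballI)
    fix l assume "l \<in> I - {m}"
    then have "m \<noteq> l" "l \<in> I" by auto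
    then show "F m ** adj (F l) ** f l = 0" using orth[OF m, of l] by simp
  qed
  finally show ?thesis using FaF[OF m] by simp
qed
lemma BaF: "m \<in> I \<Longrightarrow> B ** adj (F m) = adj (f m) ** P"
  using arg_cong[OF FA, of m adj] by (simp add: adj_mm adjA adjP)

lemma PAx: "P ** (A ** (X::'n cmat)) = 0" using mm_ext[OF PA] by simp
lemma QAx: "Q ** (A ** (X::'n cmat)) = A ** X" by (rule mm_ext[OF QA])
lemma BPx: "B ** (P ** (X::'n cmat)) = 0" using mm_ext[OF BP] by simp
lemma BQx: "B ** (Q ** (X::'n cmat)) = B ** X" by (rule mm_ext[OF BQ])
lemma FAx: "m \<in> I \<Longrightarrow> F m ** (A ** (X::'n cmat)) = P ** (f m ** X)"
  using mm_ext[OF FA] by (simp add: mm_assoc)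
lemma BaFx: "m \<in> I \<Longrightarrow> B ** (adj (F m) ** (X::'n cmat)) = adj (f m) ** (P ** X)"
  using mm_ext[OF BaF] by (simp add: mm_assoc)

lemmas ABs = PA QA BP BQ FA BaF PAx QAx BPx BQx FAx BaFx

lemma R_rr: "R (X ** \<rho>) = 0" using R_Pr[of "X ** \<rho>"] by (simp add: mm_assoc rP)
lemma R_rl: "R (\<rho> ** X) = 0" using R_Pl[of "\<rho> ** X"] by (simp add: mm_assoc[symmetric] Pr)

lemma Rrho: "R \<rho> = 0" using R_rr[of "mat 1"] by simp

lemma Pi_rho: "P_inf Lf \<rho> = \<rho>" by (simp add: Pinf_eq rho Rrho)

definition g where "g l = Q ** f l ** P" for l

lemma E1: "P_inf Lf (pertO I F f \<rho>) =
   (\<Sum>m\<in>I. P ** f m ** \<rho> ** adj (f m) ** P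
      - (1/2) *\<^sub>R (P ** adj (f m) ** f m ** \<rho> + \<rho> ** adj (f m) ** f m ** P))
   + R (recovery I g \<rho>)"
  unfolding Pinf_eq pertO_def dissipator_def recovery_def g_def
  by (simp add: mm_simps blk rhos adj_simps adjP adjQ sum.distrib sum_subtractf scaleR_sum_right
     scaleR_right_distrib scaleR_right_diff_distrib algebra_simps)


lemma E2: "pertO1 I F f \<rho> = - (1/2) *\<^sub>R (A ** \<rho> + \<rho> ** B)"
  unfolding pertO1_def A_def B_def
  by (simp add: mm_simps blk rhos sum.distrib sum_subtractf sum_negf scaleR_sum_right
     scaleR_right_distrib scaleR_right_diff_distrib algebra_simps)

lemma E3: "D0 (pertO1 I F f \<rho>) = A ** \<rho> + \<rho> ** B"
  unfolding E2 D0_def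
  by (simp add: mm_simps blk rhos Rs R_rr R_rl ABs scaleR_right_distrib scaleR_right_diff_distrib
    algebra_simps)

lemma E4a: "Q ** pertO1 I F f (A ** \<rho> + \<rho> ** B) ** Q = - (A ** \<rho> ** B)"
  unfolding pertO1_def A_def B_def
  apply (simp add: mm_simps blk rhos sum.distrib sum_subtractf scaleR_sum_right
     scaleR_right_distrib scaleR_right_diff_distrib algebra_simps)
  apply (subst (3) sum.swap)
  apply (simp add: scaleR_sum_right[symmetric] scaleR_left_distrib[symmetric])
  done

lemma E4b: "P ** pertO1 I F f (A ** \<rho> + \<rho> ** B) ** P =
  (\<Sum>m\<in>I. (P ** f m ** \<rho> ** adj (f m) ** P + P ** f m ** \<rho> ** adj (f m) ** P)
     - (1/2) *\<^sub>R (P ** adj (f m) ** P ** f m ** \<rho> + \<rho> ** adj (f m) ** P ** f m ** P))"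
  unfolding pertO1_def
  by (simp add: mm_simps blk rhos ABs sum.distrib sum_subtractf scaleR_sum_right
     scaleR_right_distrib scaleR_right_diff_distrib algebra_simps sum_distrib_left)

lemma E4c: "R (A ** \<rho> ** B) = (\<Sum>l\<in>I. P ** f l ** \<rho> ** adj (f l) ** P)"
  unfolding recovery_def
  by (simp add: mm_simps blk rhos ABs)


lemma R_QQ: "R (Q ** Z ** Q) = R Z" by (simp only: R_Ql R_Qr)

lemma E4: "P_inf Lf (pertO1 I F f (A ** \<rho> + \<rho> ** B)) =
  (\<Sum>m\<in>I. (P ** f m ** \<rho> ** adj (f m) ** P + P ** f m ** \<rho> ** adj (f m) ** P)
     - (1/2) *\<^sub>R (P ** adj (f m) ** P ** f m ** \<rho> + \<rho> ** adj (f m) ** P ** f m ** P))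
  - (\<Sum>l\<in>I. P ** f l ** \<rho> ** adj (f l) ** P)"
proof -
  let ?Z = "pertO1 I F f (A ** \<rho> + \<rho> ** B)"
  have "R ?Z = R (Q ** ?Z ** Q)" by (simp only: R_QQ)
  also have "\<dots> = - R (A ** \<rho> ** B)" by (simp only: E4a R_neg)
  finally have r: "R ?Z = - (\<Sum>l\<in>I. P ** f l ** \<rho> ** adj (f l) ** P)" by (simp only: E4c)
  show ?thesis by (simp only: Pinf_eq E4b r diff_conv_add_uminus)
qed

definition M where "M = (\<Sum>m\<in>I. adj (g m) ** g m)"

lemma fsplit: "adj (f m) ** (f m ** X) = adj (f m) ** (P ** (f m ** X)) + adj (f m) ** (Q ** (f m ** (X::'n cmat)))"
proof -
  have "adj (f m) ** (f m ** X) = adj (f m) ** ((P + Q) ** (f m ** X))" by (simp add: PplusQ)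
  then show ?thesis by (simp only: mm_ldistrib mm_rdistrib)
qed

lemma Leff_form: "L_eff I F f \<rho> = R (recovery I g \<rho>) - (1/2) *\<^sub>R (M ** \<rho> + \<rho> ** M)"
  unfolding L_eff_def Let_def drazin_D0 Pi_rho E1 E3 E4 M_def g_def
  by (simp add: mm_simps blk rhos adj_simps adjP adjQ fsplit sum.distrib sum_subtractf sum_negf
     scaleR_sum_right scaleR_right_distrib scaleR_right_diff_distrib algebra_simps sum_distrib_left)

end


lemma rec_add: "recovery I G (X + Y) = recovery I G X + recovery I G Y"
  by (simp add: recovery_def mm_simps sum.distrib)
lemma rec_cscale: "recovery I G (cscale c X) = cscale c (recovery I G X)"
proof -
  have "recovery I G (cscale c X) = (\<Sum>l\<in>I. cscale c (G l ** X ** adj (G l)))"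
    by (simp add: recovery_def mm_cscale_l mm_cscale_r)
  also have "\<dots> = cscale c (recovery I G X)"
    by (simp add: recovery_def cscale_def vec_eq_iff sum_component sum_distrib_left)
  finally show ?thesis .
qed
lemma rec_zero: "recovery I G 0 = 0" by (simp add: recovery_def)

lemma trace_rec: "trace (recovery I G X) = trace ((\<Sum>l\<in>I. adj (G l) ** G l) ** X)"
proof -
  have "trace (recovery I G X) = (\<Sum>l\<in>I. trace (G l ** X ** adj (G l)))"
    by (simp add: recovery_def trace_sum)
  also have "\<dots> = (\<Sum>l\<in>I. trace (adj (G l) ** G l ** X))"
  proof (rule sum.cong[OF refl])
    fix l
    have "trace (G l ** X ** adj (G l)) = trace (adj (G l) ** (G l ** X))" by (rule trace_mm_sym)
    also have "\<dots> = trace (adj (G l) ** G l ** X)" by (simp only: mm_assoc)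
    finally show "trace (G l ** X ** adj (G l)) = trace (adj (G l) ** G l ** X)" .
  qed
  also have "\<dots> = trace ((\<Sum>l\<in>I. adj (G l) ** G l) ** X)"
    by (simp add: trace_sum mm_sum_r)
  finally show ?thesis .
qed

context qec2 begin

abbreviation Phi where "Phi \<sigma> \<equiv> R (recovery I g \<sigma>)"

lemma Phi_add: "Phi (X + Y) = Phi X + Phi Y" by (simp add: rec_add R_add)
lemma Phi_cscale: "Phi (cscale c X) = cscale c (Phi X)" by (simp add: rec_cscale R_cscale)
lemma Phi_zero: "Phi 0 = 0" by (simp add: rec_zero R_zero)

lemma Phi_const:
  assumes corr: "\<forall>\<sigma>. \<sigma> = P ** \<sigma> ** P \<longrightarrow> (\<exists>c. Phi \<sigma> = cscale c \<sigma>)"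
  shows "\<exists>c0. \<forall>\<sigma>. \<sigma> = P ** \<sigma> ** P \<longrightarrow> Phi \<sigma> = cscale c0 \<sigma>"
proof (cases "P = 0")
  case True
  show ?thesis
  proof (intro exI allI impI)
    fix \<sigma> assume "\<sigma> = P ** \<sigma> ** P"
    with True have s0: "\<sigma> = 0" by simp
    show "Phi \<sigma> = cscale 0 \<sigma>" unfolding s0 by (simp only: Phi_zero cscale_zero)
  qed
next
  case Pn0: False
  have "P = P ** P ** P" by (simp add: PP)
  then obtain c0 where c0: "Phi P = cscale c0 P" using corr by blast
  show ?thesis
  proof (intro exI allI impI)
    fix \<sigma> assume s: "\<sigma> = P ** \<sigma> ** P"
    obtain cs where cs: "Phi \<sigma> = cscale cs \<sigma>" using corr s by blast
    have "P + \<sigma> = P ** (P + \<sigma>) ** P"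
      using s by (simp add: mm_ldistrib mm_rdistrib PP mm_assoc[symmetric])
    then obtain d where d: "Phi (P + \<sigma>) = cscale d (P + \<sigma>)" using corr by blast
    have h: "cscale d (P + \<sigma>) = cscale c0 P + cscale cs \<sigma>"
      using d c0 cs by (simp add: Phi_add)
    have eq: "cscale (d - c0) P = cscale (cs - d) \<sigma>"
    proof -
      have "\<And>i j. d * (P $ i $ j + \<sigma> $ i $ j) = c0 * P $ i $ j + cs * \<sigma> $ i $ j"
        using h by (simp add: cscale_def vec_eq_iff)
      then show ?thesis by (simp add: cscale_def vec_eq_iff algebra_simps)
    qed
    show "Phi \<sigma> = cscale c0 \<sigma>"
    proof (cases "cs = c0")
      case True then show ?thesis using cs by simp
    next
      case csn: False
      show ?thesis
      proof (cases "d = c0")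
        case True
        then have "cscale (cs - c0) \<sigma> = 0" using eq by simp
        then have "\<sigma> = 0" using csn by (auto dest: cscale_eq0)
        then show ?thesis using cs by simp
      next
        case dn: False
        have csd: "cs \<noteq> d"
        proof
          assume "cs = d"
          then have "cscale (d - c0) P = 0" using eq by simp
          then have "P = 0" using dn by (auto dest: cscale_eq0)
          then show False using Pn0 by simp
        qed
        have "\<sigma> = cscale (1 / (cs - d)) (cscale (cs - d) \<sigma>)"
          using csd by (simp add: cscale_cscale)
        also have "\<dots> = cscale ((d - c0) / (cs - d)) P"
          unfolding eq[symmetric] cscale_cscale by simp
        finally have sb: "\<sigma> = cscale ((d - c0) / (cs - d)) P" .
        have "Phi \<sigma> = cscale ((d - c0) / (cs - d)) (cscale c0 P)"
          using sb c0 by (simp add: Phi_cscale)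
        also have "\<dots> = cscale c0 \<sigma>" using sb by (simp add: cscale_cscale mult.commute)
        finally show ?thesis .
      qed
    qed
  qed
qed


lemma Qg: "Q ** g m = g m" by (simp add: g_def mm_assoc QQx)
lemma Qgx: "Q ** (g m ** (X::'n cmat)) = g m ** X" by (rule mm_ext[OF Qg])

lemma trace_Phi: "trace (Phi \<sigma>) = trace (M ** \<sigma>)"
proof -
  have "trace (Phi \<sigma>) = trace (Q ** recovery I g \<sigma>)" by (simp add: trace_rec sumQ)
  also have "Q ** recovery I g \<sigma> = recovery I g \<sigma>"
    by (simp add: recovery_def mm_sum_l mm_assoc Qgx)
  also have "trace (recovery I g \<sigma>) = trace (M ** \<sigma>)" by (simp add: trace_rec M_def)
  finally show ?thesis .
qed

lemma PMP: "P ** M ** P = M"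
  unfolding M_def g_def by (simp add: mm_simps blk adj_simps adjP adjQ)

lemma inS_P: "W = P ** W ** P \<Longrightarrow> P ** W = W" by (metis mm_assoc PP)
lemma inS_P2: "W = P ** W ** P \<Longrightarrow> W ** P = W" by (metis mm_assoc PP)

lemma M_eq:
  assumes c: "\<forall>\<sigma>. \<sigma> = P ** \<sigma> ** P \<longrightarrow> Phi \<sigma> = cscale c0 \<sigma>"
  shows "M = cscale c0 P"
proof -
  define Z where "Z = M - cscale c0 P"
  have PZP: "P ** Z ** P = Z"
    unfolding Z_def using PMP by (simp add: mm_sub_l mm_sub_r mm_cscale_l mm_cscale_r PP)
  define W where "W = adj Z"
  have hW: "W = P ** W ** P"
    unfolding W_def using arg_cong[OF PZP, of adj] by (simp add: adj_mm adjP mm_assoc)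
  have PW: "P ** W = W" using inS_P[OF hW] .
  have "trace (Z ** W) = trace (M ** W) - trace (cscale c0 (P ** W))"
    by (simp add: Z_def mm_sub_r mm_cscale_r trace_sub)
  also have "\<dots> = trace (Phi W) - c0 * trace W" by (simp add: trace_Phi PW trace_cscale)
  also have "\<dots> = 0" using c hW by (simp add: trace_cscale)
  finally have "trace (Z ** adj Z) = 0" by (simp add: W_def)
  then have "Z = 0" by (rule trace_adj_zero)
  then show ?thesis by (simp add: Z_def)
qed

lemma g_eq: "g = (\<lambda>l. Q ** f l ** P)" by (rule ext) (simp add: g_def)

lemma half_double: "(1/2::real) *\<^sub>R (X + X) = (X::'n cmat)"
  by (simp add: scaleR_2[symmetric] del: scaleR_2)

theorem Leff_zero:
  assumes corr: "\<forall>\<sigma>. \<sigma> = P ** \<sigma> ** P \<longrightarrow>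
           (\<exists>c. recovery I F (recovery I (\<lambda>l. Q ** f l ** P) \<sigma>) = cscale c \<sigma>)"
  shows "L_eff I F f \<rho> = 0"
proof -
  have corr': "\<forall>\<sigma>. \<sigma> = P ** \<sigma> ** P \<longrightarrow> (\<exists>c. Phi \<sigma> = cscale c \<sigma>)"
    using corr by (simp add: g_eq)
  obtain c0 where c0: "\<forall>\<sigma>. \<sigma> = P ** \<sigma> ** P \<longrightarrow> Phi \<sigma> = cscale c0 \<sigma>"
    using Phi_const[OF corr'] by blast
  have Mc: "M = cscale c0 P" by (rule M_eq[OF c0])
  have Phr: "Phi \<rho> = cscale c0 \<rho>" using c0 rho by simp
  show ?thesis
    unfolding Leff_form Phr Mc by (simp add: mm_cscale_l mm_cscale_r Pr rP half_double)
qed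

end

theorem mainTheorem2:
  fixes P Q :: "'n::finite cmat" and I :: "'l set" and F f :: "'l \<Rightarrow> 'n cmat"
  assumes "finite I"
    and "P ** P = P" and "adj P = P"
    and "Q = mat 1 - P"
    and "\<forall>l\<in>I. F l = P ** F l ** Q"
    and "(\<Sum>l\<in>I. adj (F l) ** F l) = Q"
    and "\<forall>l\<in>I. F l ** mp_pinv (adj (F l) ** F l) ** adj (F l) = P"
    and "\<forall>l\<in>I. \<forall>l'\<in>I. l \<noteq> l' \<longrightarrow> F l ** adj (F l') = 0"
    and "\<forall>\<rho>. lindbladian I F \<rho> = 0 \<longleftrightarrow> \<rho> = P ** \<rho> ** P"
    and "\<forall>\<rho>. \<rho> = P ** \<rho> ** P \<longrightarrow>
           (\<exists>c. recovery I F (recovery I (\<lambda>l. Q ** f l ** P) \<rho>) = cscale c \<rho>)"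
  shows "\<forall>\<rho>. \<rho> = P ** \<rho> ** P \<longrightarrow> L_eff I F f \<rho> = 0"
proof (intro allI impI)
  fix \<rho> :: "'n cmat"
  assume r: "\<rho> = P ** \<rho> ** P"
  have q: "qec P Q I F"
    using assms(1-8) by unfold_locales auto
  have q2: "qec2 P Q I F \<rho>"
    by (rule qec2.intro[OF q]) (unfold_locales, simp add: r[symmetric])
  show "L_eff I F f \<rho> = 0"
    by (rule qec2.Leff_zero[OF q2 assms(10)])
qed

end
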